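(* Let $D$ be an integral domain and let $S$ be a splitting multiplicative subset of $D$ generated by prime elements. Then $D$ is a completely atomic domain (resp., a RIDF-domain, a U-FFD) if and only if $D_S$ is a completely atomic domain (resp., a RIDF-domain, a U-FFD).
   Context: A multiplicative subset $S$ of $D$ is generated by primes if $S=\{u p_1\cdots p_n: u\in U(D),\ p_i\in P,\ n\ge0\}$ for some set $P$ of prime elements of $D$. A saturated multiplicative subset $S$ of $D$ is splitting if each $x\in D$ can be written as $x=as$ with $a\in D$, $s\in S$, such that $aD\cap tD=atD$ for all $t\in S$. An atom (irreducible element) is a nonzero nonunit $a$ such that $a=bc$ implies $b$ or $c$ is a unit; a nonzero nonunit is atomic if it is a finite product of atoms. A domain is completely atomic if every nonunit divisor of an atomic element is atomic. A domain is a RIDF-domain if every atomic element has only finitely many pairwise nonassociate irreducible divisors. A domain is a U-FFD if every atomic element has only finitely many factorizations into irreducibles (up to order and associates). *)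

theory Defs
  imports "HOL-Computational_Algebra.Fraction_Field"
    "HOL-Library.Multiset"
begin

section \<open>Multiplicative subsets of an integral domain D (D = UNIV of type 'a::idom)\<close>

definition saturated_mult_subset :: "'a::idom set \<Rightarrow> bool" where
  "saturated_mult_subset S \<longleftrightarrow> 1 \<in> S \<and> 0 \<notin> S \<and>
     (\<forall>a b. a * b \<in> S \<longleftrightarrow> a \<in> S \<and> b \<in> S)"

text \<open>Prime element of D (the same as the library's prime_elem, which requires a
  stronger type class than idom).\<close>
definition prime_element :: "'a::idom \<Rightarrow> bool" where
  "prime_element p \<longleftrightarrow> p \<noteq> 0 \<and> \<not> p dvd 1 \<and> (\<forall>a b. p dvd (a * b) \<longrightarrow> p dvd a \<or> p dvd b)"

definition generated_by_primes :: "'a::idom set \<Rightarrow> bool" where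
  "generated_by_primes S \<longleftrightarrow> (\<exists>P. (\<forall>p\<in>P. prime_element p) \<and>
     S = {u * prod_list ps | u ps. u dvd 1 \<and> set ps \<subseteq> P})"

definition principal_ideal :: "'a::idom \<Rightarrow> 'a set" where
  "principal_ideal x = {x * d | d. True}"

definition splitting_set :: "'a::idom set \<Rightarrow> bool" where
  "splitting_set S \<longleftrightarrow> saturated_mult_subset S \<and>
     (\<forall>x. \<exists>a s. s \<in> S \<and> x = a * s \<and>
        (\<forall>t\<in>S. principal_ideal a \<inter> principal_ideal t = principal_ideal (a * t)))"

text \<open>The localization D_S, realised as a subring of the quotient field of D.\<close>
definition localization :: "'a::idom set \<Rightarrow> 'a fract set" where
  "localization S = {Fract a s | a s. s \<in> S}"

definition unit_in :: "'b::comm_ring_1 set \<Rightarrow> 'b \<Rightarrow> bool" where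
  "unit_in R u \<longleftrightarrow> u \<in> R \<and> (\<exists>v\<in>R. u * v = 1)"

definition dvd_in :: "'b::comm_ring_1 set \<Rightarrow> 'b \<Rightarrow> 'b \<Rightarrow> bool" where
  "dvd_in R a b \<longleftrightarrow> a \<in> R \<and> b \<in> R \<and> (\<exists>c\<in>R. b = a * c)"

definition assoc_in :: "'b::comm_ring_1 set \<Rightarrow> 'b \<Rightarrow> 'b \<Rightarrow> bool" where
  "assoc_in R a b \<longleftrightarrow> dvd_in R a b \<and> dvd_in R b a"

definition atom_in :: "'b::comm_ring_1 set \<Rightarrow> 'b \<Rightarrow> bool" where
  "atom_in R a \<longleftrightarrow> a \<in> R \<and> a \<noteq> 0 \<and> \<not> unit_in R a \<and>
     (\<forall>b\<in>R. \<forall>c\<in>R. a = b * c \<longrightarrow> unit_in R b \<or> unit_in R c)"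

definition atomic_in :: "'b::comm_ring_1 set \<Rightarrow> 'b \<Rightarrow> bool" where
  "atomic_in R x \<longleftrightarrow> x \<in> R \<and> x \<noteq> 0 \<and> \<not> unit_in R x \<and>
     (\<exists>as. as \<noteq> [] \<and> (\<forall>a\<in>set as. atom_in R a) \<and> x = prod_list as)"

definition completely_atomic :: "'b::comm_ring_1 set \<Rightarrow> bool" where
  "completely_atomic R \<longleftrightarrow> (\<forall>x y. atomic_in R x \<and> dvd_in R y x \<and> \<not> unit_in R y
      \<longrightarrow> atomic_in R y)"

text \<open>RIDF: every atomic element has only finitely many pairwise nonassociate
  irreducible divisors, i.e. its irreducible divisors fall into finitely many
  associate classes.\<close>
definition RIDF :: "'b::comm_ring_1 set \<Rightarrow> bool" where
  "RIDF R \<longleftrightarrow> (\<forall>x. atomic_in R x \<longrightarrow>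
     finite {{b. assoc_in R a b} | a. atom_in R a \<and> dvd_in R a x})"

definition factorizations_in :: "'b::comm_ring_1 set \<Rightarrow> 'b \<Rightarrow> 'b list set" where
  "factorizations_in R x = {as. as \<noteq> [] \<and> (\<forall>a\<in>set as. atom_in R a) \<and> x = prod_list as}"

definition fact_equiv :: "'b::comm_ring_1 set \<Rightarrow> 'b list \<Rightarrow> 'b list \<Rightarrow> bool" where
  "fact_equiv R as bs \<longleftrightarrow> (\<exists>as'. mset as' = mset as \<and> list_all2 (assoc_in R) as' bs)"

definition UFFD :: "'b::comm_ring_1 set \<Rightarrow> bool" where
  "UFFD R \<longleftrightarrow> (\<forall>x. atomic_in R x \<longrightarrow>
     (\<exists>F. finite F \<and> F \<subseteq> factorizations_in R x \<and>
        (\<forall>as\<in>factorizations_in R x. \<exists>bs\<in>F. fact_equiv R as bs)))"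

end

theory Submission
  imports Defs
begin

definition mulclosed :: "'b::comm_ring_1 set \<Rightarrow> bool" where
  "mulclosed R \<longleftrightarrow> 1 \<in> R \<and> (\<forall>x\<in>R. \<forall>y\<in>R. x*y \<in> R)"

definition cls :: "'b::comm_ring_1 set \<Rightarrow> 'b \<Rightarrow> 'b set" where
  "cls R a = {b. assoc_in R a b}"

definition kap :: "'b::comm_ring_1 set \<Rightarrow> 'b list \<Rightarrow> 'b set multiset" where
  "kap R as = mset (map (cls R) as)"

lemma mulclosed_UNIV: "mulclosed UNIV" by (simp add: mulclosed_def)

lemma unit_in_mult:
  assumes "mulclosed R" "unit_in R u" "unit_in R v" shows "unit_in R (u*v)"
proof -
  obtain u' v' where "u' \<in> R" "v' \<in> R" "u*u' = 1" "v*v' = 1" "u \<in> R" "v \<in> R"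
    using assms unfolding unit_in_def by blast
  then have "(u*v)*(u'*v') = 1" by (metis mult.assoc mult.left_commute mult_1_right)
  then show ?thesis using assms \<open>u' \<in> R\<close> \<open>v' \<in> R\<close> \<open>u \<in> R\<close> \<open>v \<in> R\<close>
    unfolding unit_in_def mulclosed_def by blast
qed

lemma unit_in_inv:
  assumes "unit_in R u" obtains v where "unit_in R v" "u*v = 1"
  using assms unfolding unit_in_def by (metis mult.commute)

lemma unit_in_nz: "unit_in R (u::'b::idom) \<Longrightarrow> u \<noteq> 0"
  unfolding unit_in_def by auto

lemma prod_list_in: "mulclosed R \<Longrightarrow> set xs \<subseteq> R \<Longrightarrow> prod_list xs \<in> R"
  by (induction xs) (auto simp: mulclosed_def)

lemma atom_in_R: "atom_in R a \<Longrightarrow> a \<in> R" by (simp add: atom_in_def)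

lemma atom_unit_mult:
  fixes a :: "'b::idom"
  assumes mc: "mulclosed R" and a: "atom_in R a" and u: "unit_in R u"
  shows "atom_in R (a*u)"
proof -
  obtain v where v: "unit_in R v" "u*v = 1" using unit_in_inv[OF u] by blast
  have aR: "a \<in> R" "u \<in> R" "v \<in> R" using a u v by (auto simp: atom_in_def unit_in_def)
  have "a*u \<in> R" using mc aR by (simp add: mulclosed_def)
  moreover have "a*u \<noteq> 0" using a unit_in_nz[OF u] by (simp add: atom_in_def)
  moreover have "\<not> unit_in R (a*u)"
  proof
    assume "unit_in R (a*u)"
    then have "unit_in R (a*u*v)" using unit_in_mult[OF mc _ v(1)] by blast
    then show False using a v(2) by (simp add: atom_in_def mult.assoc)
  qed
  moreover have "unit_in R b \<or> unit_in R c" if "b \<in> R" "c \<in> R" "a*u = b*c" for b c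
  proof -
    have "a = b*(c*v)" using that v(2) by (metis mult.assoc mult_1_right)
    moreover have "c*v \<in> R" using mc that aR by (simp add: mulclosed_def)
    ultimately have "unit_in R b \<or> unit_in R (c*v)" using a that by (auto simp: atom_in_def)
    moreover have "c = (c*v)*u" using v(2) by (simp add: mult.assoc mult.commute)
    ultimately show ?thesis using unit_in_mult[OF mc _ u, of "c*v"] by metis
  qed
  ultimately show ?thesis by (simp add: atom_in_def)
qed

lemma fac_atomic:
  fixes x :: "'b::idom"
  assumes mc: "mulclosed R"
  shows "atomic_in R x \<longleftrightarrow> factorizations_in R x \<noteq> {}"
proof
  assume "atomic_in R x" then show "factorizations_in R x \<noteq> {}"
    unfolding atomic_in_def factorizations_in_def by blast
next
  assume "factorizations_in R x \<noteq> {}"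
  then obtain as where as: "as \<noteq> []" "\<forall>a\<in>set as. atom_in R a" "x = prod_list as"
    unfolding factorizations_in_def by blast
  have sR: "set as \<subseteq> R" using as(2) atom_in_R by blast
  have "x \<in> R" using prod_list_in[OF mc sR] as(3) by simp
  moreover have "x \<noteq> 0" using as(2,3) by (auto simp: atom_in_def prod_list_zero_iff)
  moreover have "\<not> unit_in R x"
  proof
    assume ux: "unit_in R x"
    obtain a rest where ar: "as = a # rest" using as(1) by (cases as) auto
    obtain v where v: "v \<in> R" "x * v = 1" using ux unfolding unit_in_def by blast
    have rR: "prod_list rest \<in> R" using prod_list_in[OF mc] sR ar by auto
    have "a * (prod_list rest * v) = 1" using v as(3) ar by (simp add: mult.assoc)
    moreover have "prod_list rest * v \<in> R" using rR v mc by (simp add: mulclosed_def)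
    ultimately have "unit_in R a" using sR ar unfolding unit_in_def by auto
    then show False using as(2) ar by (simp add: atom_in_def)
  qed
  ultimately show "atomic_in R x" using as unfolding atomic_in_def by blast
qed

lemma fac_adjust:
  fixes cs :: "'b::idom list"
  assumes mc: "mulclosed R" and cs: "cs \<noteq> []" "\<forall>c\<in>set cs. atom_in R c" and k: "unit_in R k"
  shows "((hd cs * k) # tl cs) \<in> factorizations_in R (prod_list cs * k)"
proof -
  obtain c rest where cr: "cs = c # rest" using cs by (cases cs) auto
  have "atom_in R (c*k)" using atom_unit_mult[OF mc _ k] cs cr by auto
  then show ?thesis using cs cr unfolding factorizations_in_def by (auto simp: mult_ac)
qed

lemma atomic_unit_mult:
  fixes x :: "'b::idom"
  assumes mc: "mulclosed R" and x: "atomic_in R x" and k: "unit_in R k"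
  shows "atomic_in R (x*k)"
proof -
  obtain cs where cs: "cs \<noteq> []" "\<forall>c\<in>set cs. atom_in R c" "x = prod_list cs"
    using x unfolding atomic_in_def by blast
  show ?thesis using fac_adjust[OF mc cs(1,2) k] cs(3) fac_atomic[OF mc] by auto
qed

lemma atomic_mult:
  fixes x :: "'b::idom"
  assumes mc: "mulclosed R" and x: "atomic_in R x" and y: "atomic_in R y"
  shows "atomic_in R (x*y)"
proof -
  obtain cs where cs: "cs \<noteq> []" "\<forall>c\<in>set cs. atom_in R c" "x = prod_list cs"
    using x unfolding atomic_in_def by blast
  obtain ds where ds: "ds \<noteq> []" "\<forall>c\<in>set ds. atom_in R c" "y = prod_list ds"
    using y unfolding atomic_in_def by blast
  have "cs @ ds \<in> factorizations_in R (x*y)" using cs ds unfolding factorizations_in_def by auto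
  then show ?thesis using fac_atomic[OF mc] by auto
qed

lemma assoc_refl: "a \<in> R \<Longrightarrow> mulclosed R \<Longrightarrow> assoc_in R a a"
  unfolding assoc_in_def dvd_in_def mulclosed_def by (metis mult_1_right)

lemma assoc_sym: "assoc_in R a b \<Longrightarrow> assoc_in R b a"
  unfolding assoc_in_def by blast

lemma dvd_in_trans: "mulclosed R \<Longrightarrow> dvd_in R a b \<Longrightarrow> dvd_in R b c \<Longrightarrow> dvd_in R a c"
  unfolding dvd_in_def mulclosed_def by (metis mult.assoc)

lemma assoc_trans: "mulclosed R \<Longrightarrow> assoc_in R a b \<Longrightarrow> assoc_in R b c \<Longrightarrow> assoc_in R a c"
  unfolding assoc_in_def using dvd_in_trans by blast

lemma assoc_unit: "mulclosed R \<Longrightarrow> a \<in> R \<Longrightarrow> unit_in R u \<Longrightarrow> assoc_in R a (a*u)"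
  unfolding assoc_in_def dvd_in_def unit_in_def mulclosed_def
  by (metis mult.assoc mult_1_right)

lemma cls_eq_iff: "mulclosed R \<Longrightarrow> a \<in> R \<Longrightarrow> b \<in> R \<Longrightarrow> cls R a = cls R b \<longleftrightarrow> assoc_in R a b"
proof
  assume m: "mulclosed R" "a \<in> R" "b \<in> R" "cls R a = cls R b"
  then have "b \<in> cls R b" using assoc_refl unfolding cls_def by blast
  then show "assoc_in R a b" using m unfolding cls_def by blast
next
  assume m: "mulclosed R" "assoc_in R a b"
  show "cls R a = cls R b" unfolding cls_def
    using assoc_trans[OF m(1)] assoc_sym m(2) by blast
qed

lemma kap_cons: "kap R (a # as) = add_mset (cls R a) (kap R as)"
  by (simp add: kap_def)

lemma fact_equiv_kap:
  assumes mc: "mulclosed R" and "set as \<subseteq> R" "set bs \<subseteq> R"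
  shows "fact_equiv R as bs \<longleftrightarrow> kap R as = kap R bs"
proof
  assume "fact_equiv R as bs"
  then obtain as' where as': "mset as' = mset as" "list_all2 (assoc_in R) as' bs"
    unfolding fact_equiv_def by blast
  have sR: "set as' \<subseteq> R" using as' assms by (metis mset_eq_setD)
  have "map (cls R) as' = map (cls R) bs"
    using as'(2) sR assms(3)
  proof (induction as' bs rule: list_all2_induct)
    case Nil then show ?case by simp
  next
    case (Cons x xs y ys) then show ?case using cls_eq_iff[OF mc] by auto
  qed
  then show "kap R as = kap R bs" using as'(1) unfolding kap_def
    by (metis mset_map)
next
  assume "kap R as = kap R bs"
  then show "fact_equiv R as bs" using assms(2,3)
  proof (induction bs arbitrary: as)
    case Nil
    then show ?case by (simp add: kap_def fact_equiv_def)
  next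
    case (Cons b bs)
    have "cls R b \<in># kap R as" using Cons.prems by (simp add: kap_def)
    then obtain a where a: "a \<in> set as" "cls R a = cls R b" by (auto simp: kap_def)
    have aR: "a \<in> R" using a Cons.prems by auto
    have ab: "assoc_in R a b" using cls_eq_iff[OF mc aR] a Cons.prems by auto
    have "mset (map (cls R) as) = add_mset (cls R a) (mset (map (cls R) (remove1 a as)))"
      using a(1) by (metis mset_map image_mset_add_mset insert_DiffM mset_remove1 set_mset_mset)
    then have "kap R (remove1 a as) = kap R bs" using Cons.prems a(2) by (simp add: kap_def)
    moreover have "set (remove1 a as) \<subseteq> R" using Cons.prems by (meson set_remove1_subset subset_trans)
    ultimately have "fact_equiv R (remove1 a as) bs" using Cons.IH Cons.prems by auto
    then obtain as' where as': "mset as' = mset (remove1 a as)" "list_all2 (assoc_in R) as' bs"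
      unfolding fact_equiv_def by blast
    have "mset (a # as') = mset as" using as'(1) a(1) by simp
    moreover have "list_all2 (assoc_in R) (a # as') (b # bs)" using as'(2) ab by simp
    ultimately show ?case unfolding fact_equiv_def by blast
  qed
qed

lemma UFFD_kap:
  assumes mc: "mulclosed R"
  shows "UFFD R \<longleftrightarrow> (\<forall>x. atomic_in R x \<longrightarrow> finite (kap R ` factorizations_in R x))"
proof -
  have fR: "set as \<subseteq> R" if "as \<in> factorizations_in R x" for as x
    using that atom_in_R unfolding factorizations_in_def by blast
  have eq: "(\<exists>F. finite F \<and> F \<subseteq> factorizations_in R x \<and>
        (\<forall>as\<in>factorizations_in R x. \<exists>bs\<in>F. fact_equiv R as bs))
      \<longleftrightarrow> finite (kap R ` factorizations_in R x)" for x
  proof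
    assume "\<exists>F. finite F \<and> F \<subseteq> factorizations_in R x \<and>
        (\<forall>as\<in>factorizations_in R x. \<exists>bs\<in>F. fact_equiv R as bs)"
    then obtain F where F: "finite F" "F \<subseteq> factorizations_in R x"
        "\<forall>as\<in>factorizations_in R x. \<exists>bs\<in>F. fact_equiv R as bs" by blast
    have "kap R ` factorizations_in R x \<subseteq> kap R ` F"
    proof
      fix m assume "m \<in> kap R ` factorizations_in R x"
      then obtain as where as: "as \<in> factorizations_in R x" "m = kap R as" by blast
      then obtain bs where "bs \<in> F" "fact_equiv R as bs" using F by blast
      then have "kap R as = kap R bs" using fact_equiv_kap[OF mc] fR as F by blast
      then show "m \<in> kap R ` F" using as \<open>bs \<in> F\<close> by blast
    qed
    then show "finite (kap R ` factorizations_in R x)" using F(1) finite_subset by blast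
  next
    assume fin: "finite (kap R ` factorizations_in R x)"
    define F where "F = (\<lambda>m. SOME as. as \<in> factorizations_in R x \<and> kap R as = m) ` (kap R ` factorizations_in R x)"
    have Fs: "(SOME as. as \<in> factorizations_in R x \<and> kap R as = kap R bs) \<in> factorizations_in R x
       \<and> kap R (SOME as. as \<in> factorizations_in R x \<and> kap R as = kap R bs) = kap R bs"
      if "bs \<in> factorizations_in R x" for bs
      using someI_ex[of "\<lambda>as. as \<in> factorizations_in R x \<and> kap R as = kap R bs"] that by blast
    have "finite F" using fin F_def by simp
    moreover have "F \<subseteq> factorizations_in R x" using Fs F_def by auto
    moreover have "\<forall>as\<in>factorizations_in R x. \<exists>bs\<in>F. fact_equiv R as bs"
    proof
      fix as assume as: "as \<in> factorizations_in R x"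
      let ?b = "SOME bs. bs \<in> factorizations_in R x \<and> kap R bs = kap R as"
      have "?b \<in> F" using as F_def by blast
      moreover have "fact_equiv R as ?b" using Fs[OF as] fact_equiv_kap[OF mc] fR as by metis
      ultimately show "\<exists>bs\<in>F. fact_equiv R as bs" by blast
    qed
    ultimately show "\<exists>F. finite F \<and> F \<subseteq> factorizations_in R x \<and>
        (\<forall>as\<in>factorizations_in R x. \<exists>bs\<in>F. fact_equiv R as bs)" by blast
  qed
  show ?thesis unfolding UFFD_def using eq by blast
qed

lemma UNIV_simps:
  "unit_in UNIV u \<longleftrightarrow> u dvd 1"
  "dvd_in UNIV a b \<longleftrightarrow> a dvd b"
  "assoc_in UNIV a b \<longleftrightarrow> a dvd b \<and> b dvd a"
  "atom_in UNIV a \<longleftrightarrow> a \<noteq> 0 \<and> \<not> a dvd 1 \<and> (\<forall>b c. a = b*c \<longrightarrow> b dvd 1 \<or> c dvd 1)"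
  unfolding unit_in_def dvd_in_def assoc_in_def atom_in_def
  by (auto simp: dvd_def)

lemma prime_dvd_prod_list:
  fixes p :: "'a::idom"
  assumes "prime_element p" "p dvd prod_list xs" shows "\<exists>x\<in>set xs. p dvd x"
  using assms(2)
proof (induction xs)
  case Nil then show ?case using assms(1) by (simp add: prime_element_def)
next
  case (Cons a xs) then show ?case using assms(1) by (auto simp: prime_element_def)
qed

lemma prime_atom:
  fixes p :: "'a::idom"
  assumes pp: "prime_element p" shows "atom_in UNIV p"
proof -
  have p0: "p \<noteq> 0" and pu: "\<not> p dvd 1" using pp by (auto simp: prime_element_def)
  have H: "b dvd 1 \<or> c dvd 1" if pbc: "p = b*c" for b c
  proof -
    have "p dvd b * c" using pbc by simp
    then have "p dvd b \<or> p dvd c" using pp unfolding prime_element_def by blast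
    then show ?thesis
    proof
      assume "p dvd b" then obtain e where e: "b = p*e" by (auto simp: dvd_def)
      then have "p * 1 = p * (e*c)" using pbc by (metis mult.assoc mult.commute mult_1_right)
      then have "e*c = 1" using p0 by (metis mult_left_cancel)
      then have "c dvd 1" using dvd_triv_right[of c e] by simp
      then show ?thesis by blast
    next
      assume "p dvd c" then obtain e where e: "c = p*e" by (auto simp: dvd_def)
      then have "p * 1 = p * (e*b)" using pbc by (metis mult.assoc mult.commute mult_1_right)
      then have "e*b = 1" using p0 by (metis mult_left_cancel)
      then have "b dvd 1" using dvd_triv_right[of b e] by simp
      then show ?thesis by blast
    qed
  qed
  show ?thesis unfolding UNIV_simps using p0 pu H by blast
qed

lemma atom_dvd_eq:
  fixes p q :: "'a::idom"
  assumes "atom_in UNIV q" "\<not> p dvd 1" "p dvd q" shows "assoc_in UNIV p q"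
proof -
  obtain d where "q = p*d" using assms(3) by (auto simp: dvd_def)
  then have "d dvd 1" using assms by (auto simp: UNIV_simps)
  then show ?thesis using \<open>q = p*d\<close> assms(3) by (simp add: UNIV_simps)
qed

lemma assoc_UNIV_unit:
  fixes a b :: "'a::idom"
  assumes "a dvd b" "b dvd a" "a \<noteq> 0" shows "\<exists>k. k dvd 1 \<and> b = a*k"
proof -
  obtain c where c: "b = a*c" using assms(1) by (auto elim: dvdE)
  obtain d where d: "a = b*d" using assms(2) by (auto elim: dvdE)
  have e: "a*1 = a*(c*d)" using c d by (metis mult.assoc mult_1_right)
  have "1 = c*d" using mult_left_cancel[OF assms(3)] e by blast
  then have "c*d = 1" by simp
  then have "c dvd 1" using dvd_triv_left[of c d] by simp
  then show ?thesis using c by blast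
qed

lemma prod_list_remove1:
  fixes q :: "'a::comm_monoid_mult"
  shows "q \<in> set qs \<Longrightarrow> prod_list qs = q * prod_list (remove1 q qs)"
  by (induction qs) (auto simp: mult_ac)

lemma primes_unique:
  fixes ps :: "'a::idom list"
  assumes "\<forall>p\<in>set ps. prime_element p" "\<forall>q\<in>set qs. prime_element q"
    "v dvd 1" "prod_list ps * v = prod_list qs"
  shows "kap UNIV ps = kap UNIV qs"
  using assms
proof (induction ps arbitrary: qs v)
  case Nil
  show ?case
  proof (cases qs)
    case Nil then show ?thesis by (simp add: kap_def)
  next
    case (Cons q qs')
    then have "q dvd v" using Nil by simp
    then have "q dvd 1" using Nil(3) dvd_trans by blast
    then show ?thesis using Nil(2) Cons by (simp add: prime_element_def)
  qed
next
  case (Cons p ps)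
  have pp: "prime_element p" using Cons.prems by simp
  have "p dvd prod_list qs" using Cons.prems(4) by (metis dvd_mult2 dvd_triv_left prod_list.Cons)
  then obtain q where q: "q \<in> set qs" "p dvd q" using prime_dvd_prod_list pp by blast
  have "prime_element q" using Cons.prems(2) q(1) by blast
  then have "assoc_in UNIV p q" using atom_dvd_eq[OF prime_atom[of q] _ q(2)] pp
    by (auto simp: prime_element_def)
  then obtain k where k: "k dvd 1" "q = p*k" using assoc_UNIV_unit pp
    by (auto simp: UNIV_simps prime_element_def)
  have qs: "prod_list qs = q * prod_list (remove1 q qs)"
    using q(1) by (rule prod_list_remove1)
  obtain k' where k': "k*k' = 1" using k(1) by (metis dvd_def)
  have "p * (prod_list ps * v) = p * (k * prod_list (remove1 q qs))"
    using Cons.prems(4) qs k(2) by (simp add: mult_ac)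
  then have "prod_list ps * v = k * prod_list (remove1 q qs)" using pp by (simp add: prime_element_def)
  then have "prod_list ps * (v*k') = prod_list (remove1 q qs)"
    using k' by (metis mult.assoc mult.commute mult_1_right)
  moreover have "v*k' dvd 1"
  proof -
    have "k' dvd 1" using k' dvd_triv_right[of k' k] by simp
    then show ?thesis using mult_dvd_mono[OF Cons.prems(3)] by fastforce
  qed
  moreover have "\<forall>q\<in>set (remove1 q qs). prime_element q" using Cons.prems(2)
    by (meson notin_set_remove1)
  ultimately have "kap UNIV ps = kap UNIV (remove1 q qs)" using Cons.IH Cons.prems(1) by auto
  moreover have "cls UNIV p = cls UNIV q" using cls_eq_iff[OF mulclosed_UNIV] \<open>assoc_in UNIV p q\<close> by auto
  moreover have "kap UNIV qs = add_mset (cls UNIV q) (kap UNIV (remove1 q qs))"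
    using q(1) unfolding kap_def
    by (metis mset_map image_mset_add_mset insert_DiffM mset_remove1 set_mset_mset)
  ultimately show ?case by (simp add: kap_cons)
qed

lemma prod_list_filter_split:
  fixes xs :: "'a::comm_monoid_mult list"
  shows "prod_list xs = prod_list (filter Q xs) * prod_list (filter (\<lambda>x. \<not> Q x) xs)"
  by (induction xs) (auto simp: mult_ac)

lemma kap_filter_split:
  "kap R xs = kap R (filter Q xs) + kap R (filter (\<lambda>x. \<not> Q x) xs)"
  by (induction xs) (auto simp: kap_def)

locale psplit =
  fixes S :: "'a::idom set"
  assumes spl: "splitting_set S" and gbp: "generated_by_primes S"
begin

definition sfree :: "'a \<Rightarrow> bool" where
  "sfree a \<longleftrightarrow> a \<noteq> 0 \<and> (\<forall>t\<in>S. t dvd a \<longrightarrow> t dvd 1)"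

definition P :: "'a set" where
  "P = (SOME P. (\<forall>p\<in>P. prime_element p) \<and> S = {u * prod_list ps | u ps. u dvd 1 \<and> set ps \<subseteq> P})"

lemma P_prop: "(\<forall>p\<in>P. prime_element p) \<and> S = {u * prod_list ps | u ps. u dvd 1 \<and> set ps \<subseteq> P}"
  unfolding P_def using gbp unfolding generated_by_primes_def by (rule someI_ex)

lemma P_prime: "p \<in> P \<Longrightarrow> prime_element p" using P_prop by blast

lemma S_def': "S = {u * prod_list ps | u ps. u dvd 1 \<and> set ps \<subseteq> P}" using P_prop by blast

lemma S_sat: "1 \<in> S" "0 \<notin> S" "a*b \<in> S \<longleftrightarrow> a \<in> S \<and> b \<in> S"
  using spl unfolding splitting_set_def saturated_mult_subset_def by blast+

lemma S_nz: "t \<in> S \<Longrightarrow> t \<noteq> 0" using S_sat by auto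

lemma unit_S: assumes "u dvd 1" shows "u \<in> S"
proof -
  obtain k where "1 = u*k" using assms by (rule dvdE)
  then have "u*k \<in> S" using S_sat(1) by simp
  then show ?thesis using S_sat(3) by blast
qed

lemma S_cases: "t \<in> S \<Longrightarrow> \<exists>u ps. u dvd 1 \<and> set ps \<subseteq> P \<and> t = u * prod_list ps"
  using S_def' by blast

lemma P_S: assumes "p \<in> P" shows "p \<in> S"
proof -
  have "p \<in> {u * prod_list ps | u ps. u dvd 1 \<and> set ps \<subseteq> P}"
    by (rule CollectI, rule exI[of _ 1], rule exI[of _ "[p]"]) (use assms in simp)
  then show ?thesis using S_def' by simp
qed

lemma sfree_dvd: "sfree a \<Longrightarrow> b dvd a \<Longrightarrow> sfree b"
  unfolding sfree_def by (auto intro: dvd_trans)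

lemma sfree_unit: "u dvd 1 \<Longrightarrow> sfree u"
  unfolding sfree_def by (auto intro: dvd_trans)

lemma sfree_S: "sfree a \<Longrightarrow> a \<in> S \<Longrightarrow> a dvd 1"
  unfolding sfree_def by auto

lemma key_L:
  assumes t: "t \<in> S" and a: "sfree a" and d: "t dvd a*c" shows "t dvd c"
proof -
  obtain u ps where ups: "u dvd 1" "set ps \<subseteq> P" "t = u * prod_list ps" using S_cases[OF t] by blast
  have "\<forall>c. u * prod_list ps dvd a*c \<longrightarrow> u * prod_list ps dvd c" using ups(2)
  proof (induction ps)
    case Nil then show ?case using ups(1) by (auto intro: dvd_trans)
  next
    case (Cons p ps)
    show ?case
    proof (intro allI impI)
      fix c assume h: "u * prod_list (p # ps) dvd a * c"
      have pP: "p \<in> P" using Cons.prems by simp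
      have pp: "prime_element p" using P_prime pP by blast
      have "p dvd u * prod_list (p # ps)" by simp
      then have "p dvd a * c" using h by (rule dvd_trans)
      moreover have "\<not> p dvd a" using a pp P_S[OF pP] unfolding sfree_def prime_element_def by blast
      ultimately have "p dvd c" using pp unfolding prime_element_def by blast
      then obtain c' where c': "c = p*c'" by (auto elim: dvdE)
      have "p * (u * prod_list ps) dvd p * (a*c')" using h c' by (simp add: mult_ac)
      then have "u * prod_list ps dvd a*c'" using pp by (simp add: prime_element_def)
      moreover have "set ps \<subseteq> P" using Cons.prems by simp
      then have "\<forall>c. u * prod_list ps dvd a * c \<longrightarrow> u * prod_list ps dvd c" by (rule Cons.IH)
      ultimately have "u * prod_list ps dvd c'" by blast
      then show "u * prod_list (p # ps) dvd c" using c' by (simp add: mult_ac)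
    qed
  qed
  then show ?thesis using d ups(3) by blast
qed

lemma sfree_mult: assumes a: "sfree a" and b: "sfree b" shows "sfree (a*b)"
proof -
  have "a*b \<noteq> 0" using a b by (simp add: sfree_def)
  moreover have "t dvd 1" if "t \<in> S" "t dvd a*b" for t
  proof -
    have "t dvd b" using key_L[OF that(1) a that(2)] .
    then show ?thesis using b that(1) by (simp add: sfree_def)
  qed
  ultimately show ?thesis by (simp add: sfree_def)
qed

lemma sfree_prod_list: "\<forall>x\<in>set xs. sfree x \<Longrightarrow> sfree (prod_list xs)"
  by (induction xs) (auto simp: sfree_unit sfree_mult)

lemma S_prod_list: "\<forall>x\<in>set xs. x \<in> S \<Longrightarrow> prod_list xs \<in> S"
  by (induction xs) (auto simp: S_sat)

lemma decomp: assumes "x \<noteq> 0" shows "\<exists>a s. sfree a \<and> s \<in> S \<and> x = a*s"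
proof -
  obtain a s where as: "s \<in> S" "x = a*s"
    "\<forall>t\<in>S. principal_ideal a \<inter> principal_ideal t = principal_ideal (a * t)"
    using spl unfolding splitting_set_def by blast
  have a0: "a \<noteq> 0" using as assms by auto
  have "t dvd 1" if ht: "t \<in> S" "t dvd a" for t
  proof -
    obtain k where k: "a = t*k" using ht by (auto elim: dvdE)
    have "a \<in> principal_ideal a \<inter> principal_ideal t" unfolding principal_ideal_def
      using k by (auto intro: exI[of _ 1])
    then have "a \<in> principal_ideal (a*t)" using as ht by blast
    then obtain d where "a = a*t*d" unfolding principal_ideal_def by blast
    then have "a * 1 = a * (t*d)" by (simp add: mult.assoc)
    then have "1 = t*d" using mult_left_cancel[OF a0] by blast
    then show ?thesis using dvd_triv_left[of t d] by simp
  qed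
  then show ?thesis using as a0 unfolding sfree_def by blast
qed

lemma uniq:
  assumes a: "sfree a" and a': "sfree a'" and s: "s \<in> S" and s': "s' \<in> S" and e: "a*s = a'*s'"
  shows "\<exists>w. w dvd 1 \<and> a = a'*w \<and> s' = s*w"
proof -
  have "s dvd a'*s'" using e dvd_triv_right[of s a] by simp
  then have "s dvd s'" using key_L[OF s a'] by blast
  then obtain k where k: "s' = s*k" by (auto elim: dvdE)
  have "s' dvd a*s" using e dvd_triv_right[of s' a'] by simp
  then have "s' dvd s" using key_L[OF s' a] by blast
  then obtain m where m: "s = s'*m" by (auto elim: dvdE)
  have s0: "s \<noteq> 0" using S_nz s by blast
  have "s*1 = s*(k*m)" using k m by (metis mult.assoc mult_1_right)
  then have "1 = k*m" using mult_left_cancel[OF s0] by blast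
  then have ku: "k dvd 1" using dvd_triv_left[of k m] by simp
  have "s*a = s*(a'*k)" using e k by (simp add: mult_ac)
  then have "a = a'*k" using mult_left_cancel[OF s0] by blast
  then show ?thesis using ku k by blast
qed

lemma sfree_dvd_split:
  assumes c: "sfree c" and a: "sfree a" and s: "s \<in> S" and d: "c dvd a*s"
  shows "c dvd a"
proof -
  obtain k where k: "a*s = c*k" using d by (auto elim: dvdE)
  have "a*s \<noteq> 0" using a s S_nz unfolding sfree_def by simp
  then have "k \<noteq> 0" using k by auto
  then obtain k' s'' where ks: "sfree k'" "s'' \<in> S" "k = k'*s''" using decomp by blast
  have "a*s = (c*k')*s''" using k ks by (simp add: mult_ac)
  then obtain w where "a = (c*k')*w" using uniq[OF a sfree_mult[OF c ks(1)] s ks(2)] by blast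
  then show ?thesis using dvd_triv_left[of c "k'*w"] by (simp add: mult.assoc)
qed

lemma atom_cases: assumes "atom_in UNIV c" shows "sfree c \<or> c \<in> S"
proof -
  have c0: "c \<noteq> 0" using assms by (simp add: UNIV_simps)
  obtain a s where as: "sfree a" "s \<in> S" "c = a*s" using decomp[OF c0] by blast
  then have "a dvd 1 \<or> s dvd 1" using assms by (simp add: UNIV_simps)
  then show ?thesis
  proof
    assume "a dvd 1" then have "a \<in> S" using unit_S by blast
    then show ?thesis using as S_sat by auto
  next
    assume "s dvd 1" then obtain v where "1 = s*v" by (rule dvdE)
    then have "a = a*(s*v)" by simp
    also have "\<dots> = c*v" using as by (simp add: mult_ac)
    finally have "a = c*v" .
    then have "c dvd a" using dvd_triv_left[of c v] by simp
    then show ?thesis using as sfree_dvd by blast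
  qed
qed

lemma atom_S_prime: assumes at: "atom_in UNIV c" and cS: "c \<in> S" shows "prime_element c"
proof -
  obtain u ps where ups: "u dvd 1" "set ps \<subseteq> P" "c = u * prod_list ps" using S_cases[OF cS] by blast
  have "ps \<noteq> []" using ups at by (auto simp: UNIV_simps)
  then obtain p rest where pr: "ps = p # rest" by (cases ps) auto
  have pp: "prime_element p" using pr ups P_prime by auto
  have "c = p * (u * prod_list rest)" using ups pr by (simp add: mult_ac)
  then have "u * prod_list rest dvd 1" using at pp by (auto simp: UNIV_simps prime_element_def)
  then obtain v where v: "1 = (u * prod_list rest) * v" by (rule dvdE)
  then have "p = p*((u * prod_list rest) * v)" by simp
  also have "\<dots> = c*v" using \<open>c = p * (u * prod_list rest)\<close> by (simp add: mult_ac)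
  finally have pc: "p = c*v" .
  show ?thesis unfolding prime_element_def
  proof (intro conjI allI impI)
    show "c \<noteq> 0" using at by (simp add: UNIV_simps)
    show "\<not> c dvd 1" using at by (simp add: UNIV_simps)
    fix a b assume "c dvd a*b"
    then have "p * (u * prod_list rest) dvd a*b" using \<open>c = p * (u * prod_list rest)\<close> by simp
    then have "p dvd a*b" by (rule dvd_mult_left)
    then have "p dvd a \<or> p dvd b" using pp by (simp add: prime_element_def)
    then show "c dvd a \<or> c dvd b" using pc dvd_mult_left[of c v] by auto
  qed
qed

lemma S_atomic: assumes t: "t \<in> S" and nu: "\<not> t dvd 1" shows "atomic_in UNIV t"
proof -
  obtain u ps where ups: "u dvd 1" "set ps \<subseteq> P" "t = u * prod_list ps" using S_cases[OF t] by blast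
  have "ps \<noteq> []" using ups nu by auto
  moreover have "\<forall>p\<in>set ps. atom_in UNIV p" using ups P_prime prime_atom by blast
  ultimately have "atomic_in UNIV (prod_list ps)"
    using fac_atomic[OF mulclosed_UNIV] unfolding factorizations_in_def by blast
  then have "atomic_in UNIV (prod_list ps * u)"
    using atomic_unit_mult[OF mulclosed_UNIV] ups by (simp add: UNIV_simps)
  then show ?thesis using ups by (simp add: mult.commute)
qed

lemma atomic_split:
  assumes x: "atomic_in UNIV x" and a: "sfree a" and s: "s \<in> S" and xe: "x = a*s"
  shows "a dvd 1 \<or> atomic_in UNIV a"
proof -
  obtain cs where cs: "cs \<noteq> []" "\<forall>c\<in>set cs. atom_in UNIV c" "x = prod_list cs"
    using x unfolding atomic_in_def by blast
  let ?ns = "filter sfree cs" and ?ms = "filter (\<lambda>c. \<not> sfree c) cs"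
  have "sfree (prod_list ?ns)" using sfree_prod_list by auto
  moreover have "prod_list ?ms \<in> S" by (intro S_prod_list) (use atom_cases cs(2) in auto)
  moreover have "x = prod_list ?ns * prod_list ?ms" using cs(3) prod_list_filter_split by blast
  ultimately have "a*s = prod_list ?ns * prod_list ?ms" using xe by simp
  then obtain w where w: "w dvd 1" "a = prod_list ?ns * w"
    using uniq[OF a _ s] \<open>sfree (prod_list ?ns)\<close> \<open>prod_list ?ms \<in> S\<close> by blast
  show ?thesis
  proof (cases "?ns = []")
    case True then show ?thesis using w by simp
  next
    case False
    then have "?ns \<in> factorizations_in UNIV (prod_list ?ns)"
      using cs(2) unfolding factorizations_in_def by auto
    then have "atomic_in UNIV (prod_list ?ns)" using fac_atomic[OF mulclosed_UNIV] by blast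
    then have "atomic_in UNIV (prod_list ?ns * w)"
      using atomic_unit_mult[OF mulclosed_UNIV] w(1) by (simp add: UNIV_simps)
    then show ?thesis using w(2) by simp
  qed
qed

end

context psplit
begin

abbreviation R :: "'a fract set" where "R \<equiv> localization S"

definition phi :: "'a \<Rightarrow> 'a fract" where "phi x = Fract x 1"

lemma phi_mult: "phi (a*b) = phi a * phi b"
  by (simp add: phi_def)

lemma phi_1: "phi 1 = 1" by (simp add: phi_def One_fract_def)

lemma phi_prod_list: "phi (prod_list xs) = prod_list (map phi xs)"
  by (induction xs) (simp_all add: phi_1 phi_mult)

lemma phi_eq0: "phi a = 0 \<longleftrightarrow> a = 0"
  by (simp add: phi_def Zero_fract_def eq_fract)

lemma R_mc: "mulclosed R"
proof -
  have "1 \<in> R" unfolding localization_def One_fract_def using S_sat(1) by blast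
  moreover have "x*y \<in> R" if hxy: "x \<in> R" "y \<in> R" for x y
  proof -
    obtain a s b t where "x = Fract a s" "s \<in> S" "y = Fract b t" "t \<in> S"
      using hxy unfolding localization_def by blast
    then have "x*y = Fract (a*b) (s*t)" "s*t \<in> S" using S_sat(3) by auto
    then show ?thesis unfolding localization_def by blast
  qed
  ultimately show ?thesis unfolding mulclosed_def by blast
qed

lemma phi_R: "phi x \<in> R"
  unfolding phi_def localization_def using S_sat(1) by blast

lemma Fract_R: "s \<in> S \<Longrightarrow> Fract x s \<in> R"
  unfolding localization_def by blast

lemma unit_R_iff:
  assumes s: "s \<in> S" shows "unit_in R (Fract x s) \<longleftrightarrow> x \<in> S"
proof
  assume x: "x \<in> S"
  have "Fract x s * Fract s x = 1"
    using x s S_nz by (simp add: One_fract_def eq_fract mult.commute)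
  then show "unit_in R (Fract x s)" unfolding unit_in_def using Fract_R s x by blast
next
  assume "unit_in R (Fract x s)"
  then obtain v where v: "v \<in> R" "Fract x s * v = 1" unfolding unit_in_def by blast
  then obtain y t where yt: "v = Fract y t" "t \<in> S" unfolding localization_def by blast
  have "Fract (x*y) (s*t) = Fract 1 1" using v yt by (simp add: One_fract_def)
  moreover have "s*t \<noteq> 0" using s yt S_nz by simp
  ultimately have "x*y = s*t" by (simp add: eq_fract)
  moreover have "s*t \<in> S" using s yt S_sat(3) by blast
  ultimately have "x*y \<in> S" by simp
  then show "x \<in> S" using S_sat(3) by blast
qed

lemma unit_phi: "unit_in R (phi b) \<longleftrightarrow> b \<in> S"
  unfolding phi_def using unit_R_iff[OF S_sat(1)] .

lemma unit_phi_sfree: "sfree b \<Longrightarrow> unit_in R (phi b) \<longleftrightarrow> b dvd 1"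
  using unit_phi sfree_S unit_S by blast

lemma R_decomp:
  assumes "Y \<in> R" "Y \<noteq> 0" shows "\<exists>b W. sfree b \<and> unit_in R W \<and> Y = phi b * W"
proof -
  obtain x s where xs: "Y = Fract x s" "s \<in> S" using assms unfolding localization_def by blast
  have "x \<noteq> 0" using xs assms by (auto simp: fract_collapse)
  then obtain b s' where bs: "sfree b" "s' \<in> S" "x = b*s'" using decomp by blast
  have "Y = phi b * Fract s' s" using xs bs by (simp add: phi_def)
  moreover have "unit_in R (Fract s' s)" using unit_R_iff xs bs by blast
  ultimately show ?thesis using bs by blast
qed

lemma reflect_dvd:
  assumes b: "sfree b" and c0: "c \<noteq> 0" and d: "dvd_in R (phi b) (phi c)"
  shows "b dvd c"
proof -
  obtain Y where Y: "Y \<in> R" "phi c = phi b * Y" using d unfolding dvd_in_def by blast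
  then obtain y t where yt: "Y = Fract y t" "t \<in> S" unfolding localization_def by blast
  have t0: "t \<noteq> 0" using yt S_nz by blast
  have "Fract c 1 = Fract (b*y) t" using Y yt by (simp add: phi_def)
  then have e: "c*t = b*y" using t0 by (simp add: eq_fract)
  have "y \<noteq> 0" using e c0 t0 by auto
  then obtain y' s' where ys: "sfree y'" "s' \<in> S" "y = y'*s'" using decomp by blast
  obtain c' s'' where cs: "sfree c'" "s'' \<in> S" "c = c'*s''" using decomp c0 by blast
  have "c' * (s''*t) = (b*y') * s'" using e ys cs by (simp add: mult_ac)
  moreover have "s''*t \<in> S" using cs yt S_sat(3) by blast
  ultimately obtain w where "c' = (b*y')*w"
    using uniq[OF cs(1) sfree_mult[OF b ys(1)] _ ys(2)] by blast
  then have "b dvd c'" using dvd_triv_left[of b "y'*w"] by (simp add: mult.assoc)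
  then show ?thesis using cs(3) by simp
qed

lemma phi_dvd: "b dvd c \<Longrightarrow> dvd_in R (phi b) (phi c)"
  unfolding dvd_in_def using phi_R phi_mult by (metis dvdE)

lemma reflect_assoc:
  assumes a: "sfree a" and b: "sfree b" and W: "unit_in R W" and e: "phi a = phi b * W"
  shows "\<exists>k. k dvd 1 \<and> a = b*k"
proof -
  obtain W' where W': "unit_in R W'" "W*W' = 1" using unit_in_inv[OF W] by blast
  have WR: "W \<in> R" "W' \<in> R" using W W' by (auto simp: unit_in_def)
  have "dvd_in R (phi b) (phi a)" unfolding dvd_in_def using e WR phi_R by blast
  moreover have "a \<noteq> 0" using a by (simp add: sfree_def)
  ultimately have ba: "b dvd a" using reflect_dvd[OF b] by blast
  have "phi b = phi a * W'" using e W'(2) by (metis mult.assoc mult_1_right)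
  then have "dvd_in R (phi a) (phi b)" unfolding dvd_in_def using WR phi_R by blast
  moreover have "b \<noteq> 0" using b by (simp add: sfree_def)
  ultimately have ab: "a dvd b" using reflect_dvd[OF a] by blast
  show ?thesis using assoc_UNIV_unit[OF ba ab] b by (simp add: sfree_def)
qed

lemma phi_assoc: "assoc_in UNIV a b \<Longrightarrow> assoc_in R (phi a) (phi b)"
  unfolding assoc_in_def using phi_dvd by (simp add: UNIV_simps)

lemma atom_phi:
  assumes c: "sfree c" shows "atom_in R (phi c) \<longleftrightarrow> atom_in UNIV c"
proof
  assume A: "atom_in R (phi c)"
  have c0: "c \<noteq> 0" using c by (simp add: sfree_def)
  have cu: "\<not> c dvd 1" using A unit_phi unit_S by (auto simp: atom_in_def)
  have "b dvd 1 \<or> d dvd 1" if cbd: "c = b*d" for b d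
  proof -
    have "phi c = phi b * phi d" using cbd phi_mult by simp
    then have "unit_in R (phi b) \<or> unit_in R (phi d)" using A phi_R unfolding atom_in_def by blast
    then have "b \<in> S \<or> d \<in> S" using unit_phi by blast
    moreover have "sfree b" "sfree d" using c cbd sfree_dvd by (auto intro: dvd_triv_left dvd_triv_right)
    ultimately show ?thesis using sfree_S by blast
  qed
  then show "atom_in UNIV c" using c0 cu by (simp add: UNIV_simps)
next
  assume A: "atom_in UNIV c"
  have c0: "phi c \<noteq> 0" using c by (simp add: sfree_def phi_eq0)
  have cu: "\<not> unit_in R (phi c)" using A unit_phi_sfree[OF c] by (simp add: UNIV_simps)
  have "unit_in R B \<or> unit_in R C" if BC: "B \<in> R" "C \<in> R" "phi c = B*C" for B C
  proof -
    have "B \<noteq> 0" "C \<noteq> 0" using BC c0 by auto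
    then obtain b W1 d W2 where bd: "sfree b" "unit_in R W1" "B = phi b * W1"
      "sfree d" "unit_in R W2" "C = phi d * W2" using R_decomp BC by meson
    have "phi c = phi (b*d) * (W1*W2)" using BC bd phi_mult by (simp add: mult_ac)
    then obtain k where k: "k dvd 1" "c = (b*d)*k"
      using reflect_assoc[OF c sfree_mult[OF bd(1,4)] unit_in_mult[OF R_mc bd(2,5)]] by blast
    have "c = b*(d*k)" using k by (simp add: mult.assoc)
    then have "b dvd 1 \<or> d*k dvd 1" using A by (simp add: UNIV_simps)
    then have "b dvd 1 \<or> d dvd 1" using dvd_mult_left by blast
    then have "unit_in R (phi b) \<or> unit_in R (phi d)" using unit_phi_sfree bd by blast
    then show ?thesis using unit_in_mult[OF R_mc] bd by metis
  qed
  then show "atom_in R (phi c)" using c0 cu phi_R unfolding atom_in_def by blast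
qed

lemma atom_R_decomp:
  assumes A: "atom_in R A"
  shows "\<exists>c W. sfree c \<and> atom_in UNIV c \<and> unit_in R W \<and> A = phi c * W"
proof -
  have "A \<in> R" "A \<noteq> 0" using A by (auto simp: atom_in_def)
  then obtain c W where cW: "sfree c" "unit_in R W" "A = phi c * W" using R_decomp by blast
  obtain W' where W': "unit_in R W'" "W*W' = 1" using unit_in_inv[OF cW(2)] by blast
  have "phi c = A * W'" using cW(3) W'(2) by (metis mult.assoc mult_1_right)
  then have "atom_in R (phi c)" using atom_unit_mult[OF R_mc A W'(1)] by simp
  then show ?thesis using atom_phi cW by blast
qed

lemma unit_R_1: "unit_in R 1"
  unfolding unit_in_def using R_mc by (simp add: mulclosed_def)

lemma list_rep:
  assumes "\<forall>A\<in>set As. atom_in R A"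
  shows "\<exists>cs W. length cs = length As \<and> (\<forall>c\<in>set cs. sfree c \<and> atom_in UNIV c) \<and> unit_in R W \<and>
     prod_list As = phi (prod_list cs) * W \<and> list_all2 (\<lambda>A c. assoc_in R A (phi c)) As cs"
  using assms
proof (induction As)
  case Nil then show ?case using unit_R_1 phi_1 by auto
next
  case (Cons A As)
  obtain cs W where cs: "length cs = length As" "\<forall>c\<in>set cs. sfree c \<and> atom_in UNIV c" "unit_in R W"
     "prod_list As = phi (prod_list cs) * W" "list_all2 (\<lambda>A c. assoc_in R A (phi c)) As cs"
    using Cons by auto
  have "atom_in R A" using Cons.prems by simp
  then obtain c V where cV: "sfree c" "atom_in UNIV c" "unit_in R V" "A = phi c * V"
    using atom_R_decomp by blast
  have "prod_list (A # As) = phi (prod_list (c # cs)) * (V * W)"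
    using cs(4) cV(4) phi_mult by (simp add: mult_ac)
  moreover have "assoc_in R A (phi c)"
    using assoc_sym[OF assoc_unit[OF R_mc phi_R cV(3)]] cV(4) by simp
  ultimately show ?case using cs cV unit_in_mult[OF R_mc cV(3) cs(3)]
    by (intro exI[of _ "c # cs"] exI[of _ "V*W"]) auto
qed

lemma dvd_prod_list_elem: "c \<in> set cs \<Longrightarrow> c dvd prod_list (cs :: 'a list)"
  using prod_list_remove1[of c cs] by (metis dvd_triv_left)

lemma atomic_phi:
  assumes a: "sfree a" shows "atomic_in R (phi a) \<longleftrightarrow> atomic_in UNIV a"
proof
  assume "atomic_in UNIV a"
  then obtain cs where cs: "cs \<noteq> []" "\<forall>c\<in>set cs. atom_in UNIV c" "a = prod_list cs"
    unfolding atomic_in_def by blast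
  have "\<forall>c\<in>set cs. sfree c" using cs a sfree_dvd dvd_prod_list_elem by metis
  then have "\<forall>C\<in>set (map phi cs). atom_in R C" using cs(2) atom_phi by auto
  then have "map phi cs \<in> factorizations_in R (phi a)"
    using cs phi_prod_list unfolding factorizations_in_def by auto
  then show "atomic_in R (phi a)" using fac_atomic[OF R_mc] by blast
next
  assume "atomic_in R (phi a)"
  then obtain As where As: "As \<noteq> []" "\<forall>A\<in>set As. atom_in R A" "phi a = prod_list As"
    unfolding atomic_in_def by blast
  obtain cs W where cs: "length cs = length As" "\<forall>c\<in>set cs. sfree c \<and> atom_in UNIV c" "unit_in R W"
     "prod_list As = phi (prod_list cs) * W"
    using list_rep[OF As(2)] by blast
  have "sfree (prod_list cs)" using cs(2) sfree_prod_list by blast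
  then obtain k where k: "k dvd 1" "a = prod_list cs * k"
    using reflect_assoc[OF a _ cs(3)] cs(4) As(3) by metis
  have "cs \<noteq> []" using cs(1) As(1) by auto
  then have "cs \<in> factorizations_in UNIV (prod_list cs)" using cs(2) unfolding factorizations_in_def by auto
  then have "atomic_in UNIV (prod_list cs)" using fac_atomic[OF mulclosed_UNIV] by blast
  then have "atomic_in UNIV (prod_list cs * k)" using atomic_unit_mult[OF mulclosed_UNIV] k(1)
    by (simp add: UNIV_simps)
  then show "atomic_in UNIV a" using k(2) by simp
qed

end

lemma kap_adjust:
  assumes mc: "mulclosed R" and cs: "cs \<noteq> []" "hd cs \<in> R" and k: "unit_in R k"
  shows "kap R ((hd cs * k) # tl cs) = kap R cs"
proof -
  have kR: "k \<in> R" using k by (simp add: unit_in_def)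
  have "hd cs * k \<in> R" using mc cs kR by (simp add: mulclosed_def)
  moreover have "assoc_in R (hd cs) (hd cs * k)" using assoc_unit[OF mc cs(2) k] .
  ultimately have "cls R (hd cs * k) = cls R (hd cs)"
    using cls_eq_iff[OF mc] cs(2) assoc_sym by blast
  moreover have "cs = hd cs # tl cs" using cs by simp
  ultimately show ?thesis by (metis kap_cons)
qed

lemma assoc_in_mem: "assoc_in R a b \<Longrightarrow> a \<in> R \<and> b \<in> R"
  by (simp add: assoc_in_def dvd_in_def)

context psplit
begin

definition psi :: "'a set \<Rightarrow> 'a fract set" where
  "psi C = {B. \<exists>c\<in>C. assoc_in R (phi c) B}"

definition gback :: "'a fract set \<Rightarrow> 'a set" where
  "gback C = {b. sfree b \<and> phi b \<in> C}"

lemma psi_eq: "psi (cls UNIV c) = cls R (phi c)"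
proof
  show "psi (cls UNIV c) \<subseteq> cls R (phi c)"
  proof
    fix B assume "B \<in> psi (cls UNIV c)"
    then obtain c' where "assoc_in UNIV c c'" "assoc_in R (phi c') B"
      unfolding psi_def cls_def by blast
    then show "B \<in> cls R (phi c)" unfolding cls_def
      using phi_assoc assoc_trans[OF R_mc] by blast
  qed
next
  have "c \<in> cls UNIV c" unfolding cls_def using assoc_refl[OF _ mulclosed_UNIV] by blast
  then show "cls R (phi c) \<subseteq> psi (cls UNIV c)" unfolding psi_def cls_def by blast
qed

lemma gback_eq: assumes c: "sfree c" shows "gback (cls R (phi c)) = cls UNIV c"
proof
  show "gback (cls R (phi c)) \<subseteq> cls UNIV c"
  proof
    fix b assume "b \<in> gback (cls R (phi c))"
    then have b: "sfree b" "assoc_in R (phi c) (phi b)" unfolding gback_def cls_def by auto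
    have b0: "b \<noteq> 0" "c \<noteq> 0" using b(1) c by (auto simp: sfree_def)
    have "dvd_in R (phi c) (phi b)" "dvd_in R (phi b) (phi c)" using b(2) by (auto simp: assoc_in_def)
    then have "c dvd b" "b dvd c" using reflect_dvd[OF c _] reflect_dvd[OF b(1) _] b0 by blast+
    then show "b \<in> cls UNIV c" unfolding cls_def by (simp add: UNIV_simps)
  qed
next
  show "cls UNIV c \<subseteq> gback (cls R (phi c))"
  proof
    fix b assume "b \<in> cls UNIV c"
    then have "assoc_in UNIV c b" unfolding cls_def by simp
    then have "sfree b" "assoc_in R (phi c) (phi b)" using sfree_dvd[OF c] phi_assoc
      by (auto simp: UNIV_simps)
    then show "b \<in> gback (cls R (phi c))" unfolding gback_def cls_def by simp
  qed
qed

lemma map_cls_rep: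
  "list_all2 (\<lambda>A c. assoc_in R A (phi c)) As cs \<Longrightarrow> map (cls R) As = map (\<lambda>c. cls R (phi c)) cs"
proof (induction As cs rule: list_all2_induct)
  case Nil then show ?case by simp
next
  case (Cons A As c cs)
  have "cls R A = cls R (phi c)" using cls_eq_iff[OF R_mc] assoc_in_mem[OF Cons.hyps(1)] Cons.hyps(1) by blast
  then show ?case using Cons.IH by simp
qed

lemma X_rep:
  assumes X: "atomic_in R X"
  shows "\<exists>a V'. sfree a \<and> unit_in R V' \<and> phi a = X * V' \<and> atomic_in UNIV a"
proof -
  have X0: "X \<noteq> 0" "X \<in> R" using X by (auto simp: atomic_in_def)
  obtain a V where aV: "sfree a" "unit_in R V" "X = phi a * V" using R_decomp[OF X0(2,1)] by blast
  obtain V' where V': "unit_in R V'" "V*V' = 1" using unit_in_inv[OF aV(2)] by blast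
  have Xa: "phi a = X * V'" using aV(3) V'(2) by (metis mult.assoc mult_1_right)
  have "atomic_in R (phi a)" using atomic_unit_mult[OF R_mc X V'(1)] Xa by simp
  then have "atomic_in UNIV a" using atomic_phi aV(1) by blast
  then show ?thesis using aV(1) V' Xa by blast
qed

lemma unit_R_mem: "unit_in R W \<Longrightarrow> W \<in> R" by (simp add: unit_in_def)

lemma CA_iff: "completely_atomic (UNIV::'a set) \<longleftrightarrow> completely_atomic R"
proof
  assume CA: "completely_atomic (UNIV::'a set)"
  show "completely_atomic R" unfolding completely_atomic_def
  proof (intro allI impI, elim conjE)
    fix X Y assume X: "atomic_in R X" and YX: "dvd_in R Y X" and Yu: "\<not> unit_in R Y"
    obtain a V' where aV: "sfree a" "unit_in R V'" "phi a = X * V'" "atomic_in UNIV a"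
      using X_rep[OF X] by blast
    have X0: "X \<noteq> 0" using X by (simp add: atomic_in_def)
    obtain c where c: "c \<in> R" "X = Y*c" "Y \<in> R" using YX unfolding dvd_in_def by blast
    have "Y \<noteq> 0" using c X0 by auto
    then obtain b W where bW: "sfree b" "unit_in R W" "Y = phi b * W" using R_decomp c(3) by blast
    have "phi a = phi b * (W * c * V')" using aV(3) c(2) bW(3) by (simp add: mult_ac)
    moreover have "W * c * V' \<in> R" using R_mc c(1) unit_R_mem[OF bW(2)] unit_R_mem[OF aV(2)]
      by (simp add: mulclosed_def)
    ultimately have "dvd_in R (phi b) (phi a)" unfolding dvd_in_def using phi_R by blast
    moreover have "a \<noteq> 0" using aV(1) by (simp add: sfree_def)
    ultimately have ba: "b dvd a" using reflect_dvd[OF bW(1)] by blast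
    have bu: "\<not> b dvd 1"
    proof
      assume "b dvd 1"
      then have "unit_in R (phi b)" using unit_phi_sfree[OF bW(1)] by simp
      then have "unit_in R Y" using unit_in_mult[OF R_mc _ bW(2)] bW(3) by simp
      then show False using Yu by simp
    qed
    have "atomic_in UNIV b" using CA aV(4) ba bu unfolding completely_atomic_def
      by (simp add: UNIV_simps)
    then have "atomic_in R (phi b)" using atomic_phi bW(1) by blast
    then show "atomic_in R Y" using atomic_unit_mult[OF R_mc _ bW(2)] bW(3) by simp
  qed
next
  assume CA: "completely_atomic R"
  show "completely_atomic (UNIV::'a set)" unfolding completely_atomic_def
  proof (intro allI impI, elim conjE)
    fix x y :: 'a assume x: "atomic_in UNIV x" and yx: "dvd_in UNIV y x" and yu: "\<not> unit_in UNIV y"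
    have x0: "x \<noteq> 0" using x by (simp add: atomic_in_def)
    have yx': "y dvd x" using yx by (simp add: UNIV_simps)
    have y0: "y \<noteq> 0" using yx' x0 by auto
    obtain a s where as: "sfree a" "s \<in> S" "x = a*s" using decomp[OF x0] by blast
    obtain b t where bt: "sfree b" "t \<in> S" "y = b*t" using decomp[OF y0] by blast
    have aa: "a dvd 1 \<or> atomic_in UNIV a" using atomic_split[OF x as] .
    have "b dvd x" using yx' bt(3) dvd_mult_left by blast
    then have ba: "b dvd a" using sfree_dvd_split[OF bt(1) as(1,2)] as(3) by simp
    show "atomic_in UNIV y"
    proof (cases "b dvd 1")
      case True
      have "\<not> t dvd 1"
      proof
        assume "t dvd 1" then have "b*t dvd 1*1" using mult_dvd_mono[OF True] by blast
        then have "y dvd 1" using bt(3) by simp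
        then show False using yu by (simp add: UNIV_simps)
      qed
      then have "atomic_in UNIV t" using S_atomic bt(2) by blast
      then have "atomic_in UNIV (t*b)" using atomic_unit_mult[OF mulclosed_UNIV] True
        by (simp add: UNIV_simps)
      then show ?thesis using bt(3) by (simp add: mult.commute)
    next
      case False
      then have "\<not> a dvd 1" using ba dvd_trans by blast
      then have "atomic_in UNIV a" using aa by simp
      then have "atomic_in R (phi a)" using atomic_phi as(1) by blast
      moreover have "dvd_in R (phi b) (phi a)" using phi_dvd ba by blast
      moreover have "\<not> unit_in R (phi b)" using unit_phi_sfree[OF bt(1)] False by simp
      ultimately have "atomic_in R (phi b)" using CA unfolding completely_atomic_def by blast
      then have bat: "atomic_in UNIV b" using atomic_phi bt(1) by blast
      show ?thesis
      proof (cases "t dvd 1")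
        case True
        then show ?thesis using atomic_unit_mult[OF mulclosed_UNIV bat] bt(3) by (simp add: UNIV_simps)
      next
        case False
        then have "atomic_in UNIV t" using S_atomic bt(2) by blast
        then show ?thesis using atomic_mult[OF mulclosed_UNIV bat] bt(3) by simp
      qed
    qed
  qed
qed

end

context psplit
begin

lemma RIDF_iff: "RIDF (UNIV::'a set) \<longleftrightarrow> RIDF R"
proof
  assume H: "RIDF (UNIV::'a set)"
  show "RIDF R" unfolding RIDF_def
  proof (intro allI impI)
    fix X assume X: "atomic_in R X"
    obtain a V' where aV: "sfree a" "unit_in R V'" "phi a = X * V'" "atomic_in UNIV a"
      using X_rep[OF X] by blast
    have fin: "finite {{b. assoc_in UNIV a' b} | a'. atom_in UNIV a' \<and> dvd_in UNIV a' a}"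
      using H aV(4) unfolding RIDF_def by blast
    have "{{B. assoc_in R A B} | A. atom_in R A \<and> dvd_in R A X}
       \<subseteq> psi ` {{b. assoc_in UNIV a' b} | a'. atom_in UNIV a' \<and> dvd_in UNIV a' a}"
    proof
      fix C assume "C \<in> {{B. assoc_in R A B} | A. atom_in R A \<and> dvd_in R A X}"
      then obtain A where A: "C = {B. assoc_in R A B}" "atom_in R A" "dvd_in R A X" by blast
      obtain c W where cW: "sfree c" "atom_in UNIV c" "unit_in R W" "A = phi c * W"
        using atom_R_decomp[OF A(2)] by blast
      obtain k where k: "k \<in> R" "X = A*k" using A(3) unfolding dvd_in_def by blast
      have "phi a = phi c * (W*k*V')" using aV(3) k(2) cW(4) by (simp add: mult_ac)
      moreover have "W*k*V' \<in> R" using R_mc k(1) unit_R_mem[OF cW(3)] unit_R_mem[OF aV(2)]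
        by (simp add: mulclosed_def)
      ultimately have "dvd_in R (phi c) (phi a)" unfolding dvd_in_def using phi_R by blast
      moreover have "a \<noteq> 0" using aV(1) by (simp add: sfree_def)
      ultimately have ca: "c dvd a" using reflect_dvd[OF cW(1)] by blast
      have "assoc_in R (phi c) A" using assoc_unit[OF R_mc phi_R cW(3)] cW(4) by simp
      then have "cls R A = cls R (phi c)" using cls_eq_iff[OF R_mc] assoc_in_mem assoc_sym by metis
      then have "C = psi (cls UNIV c)" using A(1) psi_eq unfolding cls_def by simp
      moreover have "cls UNIV c \<in> {{b. assoc_in UNIV a' b} | a'. atom_in UNIV a' \<and> dvd_in UNIV a' a}"
        using cW(2) ca unfolding cls_def by (auto simp: UNIV_simps)
      ultimately show "C \<in> psi ` {{b. assoc_in UNIV a' b} | a'. atom_in UNIV a' \<and> dvd_in UNIV a' a}"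
        by blast
    qed
    then show "finite {{B. assoc_in R A B} | A. atom_in R A \<and> dvd_in R A X}"
      using fin finite_surj by blast
  qed
next
  assume H: "RIDF R"
  show "RIDF (UNIV::'a set)" unfolding RIDF_def
  proof (intro allI impI)
    fix x :: 'a assume x: "atomic_in UNIV x"
    have x0: "x \<noteq> 0" using x by (simp add: atomic_in_def)
    obtain a s where as: "sfree a" "s \<in> S" "x = a*s" using decomp[OF x0] by blast
    obtain u qs where uqs: "u dvd 1" "set qs \<subseteq> P" "s = u * prod_list qs" using S_cases[OF as(2)] by blast
    let ?RS = "{{B. assoc_in R A B} | A. atom_in R A \<and> dvd_in R A (phi a)}"
    let ?T = "cls UNIV ` set qs \<union> (if a dvd 1 then {} else gback ` ?RS)"
    have finT: "finite ?T"
    proof (cases "a dvd 1")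
      case False
      then have "atomic_in UNIV a" using atomic_split[OF x as] by simp
      then have "atomic_in R (phi a)" using atomic_phi as(1) by blast
      then have "finite ?RS" using H unfolding RIDF_def by blast
      then show ?thesis by simp
    qed simp
    have "{{b. assoc_in UNIV c b} | c. atom_in UNIV c \<and> dvd_in UNIV c x} \<subseteq> ?T"
    proof
      fix C assume "C \<in> {{b. assoc_in UNIV c b} | c. atom_in UNIV c \<and> dvd_in UNIV c x}"
      then obtain c where c0: "C = {b. assoc_in UNIV c b}" "atom_in UNIV c" "dvd_in UNIV c x"
        by blast
      then have c: "C = cls UNIV c" "atom_in UNIV c" "c dvd x"
        unfolding cls_def by (auto simp: UNIV_simps)
      have cu: "\<not> c dvd 1" using c(2) by (simp add: UNIV_simps)
      show "C \<in> ?T"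
      proof (cases "sfree c")
        case True
        have ca: "c dvd a" using sfree_dvd_split[OF True as(1,2)] c(3) as(3) by simp
        then have "\<not> a dvd 1" using cu dvd_trans by blast
        moreover have "cls R (phi c) \<in> ?RS" using atom_phi[OF True] c(2) phi_dvd[OF ca]
          unfolding cls_def by blast
        moreover have "C = gback (cls R (phi c))" using gback_eq[OF True] c(1) by simp
        ultimately show ?thesis by simp
      next
        case False
        then have cS: "c \<in> S" using atom_cases c(2) by blast
        then have cp: "prime_element c" using atom_S_prime c(2) by blast
        have "\<not> c dvd a" using False sfree_dvd as(1) by blast
        then have "c dvd s" using cp c(3) as(3) unfolding prime_element_def by blast
        moreover have "\<not> c dvd u" using cu uqs(1) dvd_trans by blast
        ultimately have "c dvd prod_list qs" using cp uqs(3) unfolding prime_element_def by blast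
        then obtain q where q: "q \<in> set qs" "c dvd q" using prime_dvd_prod_list cp by blast
        have "prime_element q" using q(1) uqs(2) P_prime by blast
        then have "assoc_in UNIV c q" using atom_dvd_eq[OF prime_atom _ q(2)] cu by blast
        then have "cls UNIV c = cls UNIV q" using cls_eq_iff[OF mulclosed_UNIV] by blast
        then show ?thesis using c(1) q(1) by simp
      qed
    qed
    then show "finite {{b. assoc_in UNIV c b} | c. atom_in UNIV c \<and> dvd_in UNIV c x}"
      using finT finite_subset by blast
  qed
qed

end

context psplit
begin

lemma UFFD_iff: "UFFD (UNIV::'a set) \<longleftrightarrow> UFFD R"
  unfolding UFFD_kap[OF mulclosed_UNIV] UFFD_kap[OF R_mc]
proof
  assume H: "\<forall>x::'a. atomic_in UNIV x \<longrightarrow> finite (kap UNIV ` factorizations_in UNIV x)"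
  show "\<forall>X. atomic_in R X \<longrightarrow> finite (kap R ` factorizations_in R X)"
  proof (intro allI impI)
    fix X assume X: "atomic_in R X"
    obtain a V' where aV: "sfree a" "unit_in R V'" "phi a = X * V'" "atomic_in UNIV a"
      using X_rep[OF X] by blast
    have "kap R ` factorizations_in R X \<subseteq> image_mset psi ` kap UNIV ` factorizations_in UNIV a"
    proof
      fix M assume "M \<in> kap R ` factorizations_in R X"
      then obtain As where As: "As \<noteq> []" "\<forall>A\<in>set As. atom_in R A" "X = prod_list As" "M = kap R As"
        unfolding factorizations_in_def by blast
      obtain cs W where cs: "length cs = length As" "\<forall>c\<in>set cs. sfree c \<and> atom_in UNIV c"
        "unit_in R W" "prod_list As = phi (prod_list cs) * W"
        "list_all2 (\<lambda>A c. assoc_in R A (phi c)) As cs"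
        using list_rep[OF As(2)] by blast
      have "map (cls R) As = map (\<lambda>c. cls R (phi c)) cs" using map_cls_rep[OF cs(5)] .
      also have "\<dots> = map (\<lambda>c. psi (cls UNIV c)) cs" using psi_eq by simp
      finally have M: "M = image_mset psi (kap UNIV cs)" using As(4) unfolding kap_def
        by (simp add: mset_map image_mset.compositionality o_def)
      have "phi a = phi (prod_list cs) * (W*V')" using aV(3) As(3) cs(4) by (simp add: mult_ac)
      moreover have "sfree (prod_list cs)" using cs(2) sfree_prod_list by blast
      ultimately obtain k where k: "k dvd 1" "a = prod_list cs * k"
        using reflect_assoc[OF aV(1) _ unit_in_mult[OF R_mc cs(3) aV(2)]] by blast
      have csne: "cs \<noteq> []" using cs(1) As(1) by auto
      have ku: "unit_in UNIV k" using k(1) by (simp add: UNIV_simps)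
      have csat: "\<forall>c\<in>set cs. atom_in UNIV c" using cs(2) by blast
      have "((hd cs * k) # tl cs) \<in> factorizations_in UNIV a"
        using fac_adjust[OF mulclosed_UNIV csne csat ku] k(2) by simp
      then have "image_mset psi (kap UNIV ((hd cs * k) # tl cs)) \<in> image_mset psi ` kap UNIV ` factorizations_in UNIV a"
        by (intro imageI)
      moreover have "kap UNIV ((hd cs * k) # tl cs) = kap UNIV cs"
        using kap_adjust[OF mulclosed_UNIV csne _ ku] by simp
      ultimately show "M \<in> image_mset psi ` kap UNIV ` factorizations_in UNIV a"
        using M \<open>kap UNIV ((hd cs * k) # tl cs) = kap UNIV cs\<close> by simp
    qed
    moreover have "finite (image_mset psi ` kap UNIV ` factorizations_in UNIV a)" using H aV(4) by blast
    ultimately show "finite (kap R ` factorizations_in R X)" using finite_subset by blast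
  qed
next
  assume H: "\<forall>X. atomic_in R X \<longrightarrow> finite (kap R ` factorizations_in R X)"
  show "\<forall>x::'a. atomic_in UNIV x \<longrightarrow> finite (kap UNIV ` factorizations_in UNIV x)"
  proof (intro allI impI)
    fix x :: 'a assume x: "atomic_in UNIV x"
    have x0: "x \<noteq> 0" using x by (simp add: atomic_in_def)
    obtain a s where as: "sfree a" "s \<in> S" "x = a*s" using decomp[OF x0] by blast
    obtain u qs where uqs: "u dvd 1" "set qs \<subseteq> P" "s = u * prod_list qs" using S_cases[OF as(2)] by blast
    have finA: "finite (kap R ` factorizations_in R (phi a))"
    proof (cases "atomic_in R (phi a)")
      case False then show ?thesis using fac_atomic[OF R_mc] by simp
    qed (use H in blast)
    let ?T = "(\<lambda>M. M + kap UNIV qs) ` ({{#}} \<union> image_mset gback ` kap R ` factorizations_in R (phi a))"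
    have "kap UNIV ` factorizations_in UNIV x \<subseteq> ?T"
    proof
      fix M assume "M \<in> kap UNIV ` factorizations_in UNIV x"
      then obtain cs where cs: "cs \<noteq> []" "\<forall>c\<in>set cs. atom_in UNIV c" "x = prod_list cs" "M = kap UNIV cs"
        unfolding factorizations_in_def by blast
      let ?ns = "filter sfree cs" and ?ms = "filter (\<lambda>c. \<not> sfree c) cs"
      have Msplit: "M = kap UNIV ?ns + kap UNIV ?ms" using cs(4) kap_filter_split by blast
      have nsf: "sfree (prod_list ?ns)" using sfree_prod_list by auto
      have msS: "prod_list ?ms \<in> S" by (intro S_prod_list) (use atom_cases cs(2) in auto)
      have "a*s = prod_list ?ns * prod_list ?ms" using cs(3) as(3) prod_list_filter_split by metis
      then obtain w where w: "w dvd 1" "a = prod_list ?ns * w" "prod_list ?ms = s*w"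
        using uniq[OF as(1) nsf as(2) msS] by blast
      have msp: "\<forall>m\<in>set ?ms. prime_element m" using atom_cases atom_S_prime cs(2) by auto
      have qsp: "\<forall>q\<in>set qs. prime_element q" using uqs(2) P_prime by blast
      have "prod_list qs * (u*w) = prod_list ?ms" using w(3) uqs(3) by (simp add: mult_ac)
      moreover have "u*w dvd 1" using mult_dvd_mono[OF uqs(1) w(1)] by simp
      ultimately have kq: "kap UNIV qs = kap UNIV ?ms" using primes_unique[OF qsp msp] by blast
      have "kap UNIV ?ns \<in> {{#}} \<union> image_mset gback ` kap R ` factorizations_in R (phi a)"
      proof (cases "?ns = []")
        case True then show ?thesis by (simp add: kap_def)
      next
        case False
        let ?As = "map phi ?ns"
        have Asat: "\<forall>A\<in>set ?As. atom_in R A" using atom_phi cs(2) by auto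
        have Asne: "?As \<noteq> []" using False by simp
        have wu: "unit_in R (phi w)" using unit_phi unit_S w(1) by blast
        have "((hd ?As * phi w) # tl ?As) \<in> factorizations_in R (prod_list ?As * phi w)"
          using fac_adjust[OF R_mc Asne Asat wu] .
        moreover have "prod_list ?As * phi w = phi a" using w(2) phi_prod_list phi_mult by metis
        moreover have "kap R ((hd ?As * phi w) # tl ?As) = kap R ?As"
          using kap_adjust[OF R_mc Asne _ wu] phi_R Asne by (simp add: hd_map)
        moreover have "image_mset gback (kap R ?As) = kap UNIV ?ns"
        proof -
          have A: "map (\<lambda>c. gback (cls R (phi c))) ?ns = map (cls UNIV) ?ns"
            using gback_eq by simp
          have "image_mset gback (kap R ?As) = mset (map (\<lambda>c. gback (cls R (phi c))) ?ns)"
            unfolding kap_def by (simp only: mset_map[symmetric] map_map o_def)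
          also have "\<dots> = mset (map (cls UNIV) ?ns)" using A by (simp only:)
          also have "\<dots> = kap UNIV ?ns" by (simp only: kap_def)
          finally show ?thesis .
        qed
        ultimately show ?thesis by force
      qed
      then have "kap UNIV ?ns + kap UNIV qs \<in> ?T" by (rule imageI)
      then show "M \<in> ?T" using Msplit kq by simp
    qed
    moreover have "finite ?T" using finA by simp
    ultimately show "finite (kap UNIV ` factorizations_in UNIV x)" using finite_subset by blast
  qed
qed

end

theorem proposition3p3:
  fixes S :: "'a::idom set"
  assumes "splitting_set S" and "generated_by_primes S"
  shows "(completely_atomic (UNIV :: 'a set) \<longleftrightarrow> completely_atomic (localization S))
       \<and> (RIDF (UNIV :: 'a set) \<longleftrightarrow> RIDF (localization S))
       \<and> (UFFD (UNIV :: 'a set) \<longleftrightarrow> UFFD (localization S))"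
proof -
  interpret psplit S using assms by unfold_locales
  show ?thesis using CA_iff RIDF_iff UFFD_iff by blast
qed

end
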